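(* In the errorless symmetric relay network described in the context, for every horizon $T\ge1$ the greedy sampling policy $G$ minimizes the average sum AoI at the relay, i.e. $G\in\arg\min_{\pi}\frac{1}{TK}\sum_{t=1}^T\sum_{k=1}^K g_k^{\pi}(t)$; equivalently, $G\in\arg\max_{\pi}\sum_{t=1}^T\sum_{\tau=1}^{t-1}R(\mathcal{S}^{\pi}(\tau))$.
   Context: Fix integers $K\ge 2$ and $S,U$ with $1\le S<K$, $1\le U<K$, and $S=U$. There are $K$ processes indexed by $k\in\{1,\dots,K\}$ and time slots $t=1,2,\dots$. The state at time $t$ consists of relay AoI values $g_k(t)$ and destination AoI values $h_k(t)$, with $g_k(1)=h_k(1)=1$ for all $k$. A policy $\pi$ is a map assigning to the current state a pair $(\mathcal{S}^{\pi}(t),\mathcal{U}^{\pi}(t))$ of subsets of $\{1,\dots,K\}$ with $|\mathcal{S}^{\pi}(t)|=S$ and $|\mathcal{U}^{\pi}(t)|=U$. Errorless dynamics: $g_k(t+1)=1$ if $k\in\mathcal{S}(t)$, else $g_k(t+1)=g_k(t)+1$; $h_k(t+1)=g_k(t)+1$ if $k\in\mathcal{U}(t)$, else $h_k(t+1)=h_k(t)+1$. Write $g_k^\pi(t)$ for the relay AoI under $\pi$ and $R(\mathcal{S}^{\pi}(\tau))=\sum_{k\in\mathcal{S}^{\pi}(\tau)} g_k^{\pi}(\tau)$. The greedy policy $G$ chooses at each time $t$ a set $\mathcal{S}^G(t)$ of $S$ indices with the largest values $g_k(t)$ (maximizing $\sum_{k\in\mathcal{S}}g_k(t)$ over $|\mathcal{S}|=S$)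 and a set $\mathcal{U}^G(t)$ of $U$ indices maximizing $\sum_{k\in\mathcal{U}}(h_k(t)-g_k(t))$. *)

theory Defs
  imports Complex_Main
begin

text \<open>State at a time slot: relay AoI g and destination AoI h, as functions of the
process index (only indices 1..K are meaningful).\<close>
type_synonym state = "(nat \<Rightarrow> nat) \<times> (nat \<Rightarrow> nat)"

text \<open>A policy maps the current state to the pair (sampled set, updated set).\<close>
type_synonym policy = "state \<Rightarrow> nat set \<times> nat set"

definition valid_policy :: "nat \<Rightarrow> nat \<Rightarrow> nat \<Rightarrow> policy \<Rightarrow> bool" where
  "valid_policy K S U pol \<longleftrightarrow>
     (\<forall>st. fst (pol st) \<subseteq> {1..K} \<and> card (fst (pol st)) = S \<and>
           snd (pol st) \<subseteq> {1..K} \<and> card (snd (pol st)) = U)"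

definition step :: "policy \<Rightarrow> state \<Rightarrow> state" where
  "step pol st =
     (let g = fst st; h = snd st; Ss = fst (pol st); Us = snd (pol st) in
       (\<lambda>k. if k \<in> Ss then 1 else g k + 1,
        \<lambda>k. if k \<in> Us then g k + 1 else h k + 1))"

text \<open>traj pol n is the state at time slot t = n + 1; at t = 1 all AoI values are 1.\<close>
fun traj :: "policy \<Rightarrow> nat \<Rightarrow> state" where
  "traj pol 0 = (\<lambda>_. 1, \<lambda>_. 1)"
| "traj pol (Suc n) = step pol (traj pol n)"

definition relay_aoi :: "policy \<Rightarrow> nat \<Rightarrow> nat \<Rightarrow> nat" where
  "relay_aoi pol k t = fst (traj pol (t - 1)) k"

definition is_greedy :: "nat \<Rightarrow> nat \<Rightarrow> nat \<Rightarrow> policy \<Rightarrow> bool" where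
  "is_greedy K S U G \<longleftrightarrow> valid_policy K S U G \<and>
     (\<forall>g h. (\<forall>A. A \<subseteq> {1..K} \<and> card A = S \<longrightarrow>
                  sum g A \<le> sum g (fst (G (g, h)))) \<and>
            (\<forall>A. A \<subseteq> {1..K} \<and> card A = U \<longrightarrow>
                  (\<Sum>k\<in>A. int (h k) - int (g k)) \<le>
                  (\<Sum>k\<in>snd (G (g, h)). int (h k) - int (g k))))"

definition avg_relay_aoi :: "nat \<Rightarrow> nat \<Rightarrow> policy \<Rightarrow> real" where
  "avg_relay_aoi K T pol =
     (\<Sum>t=1..T. \<Sum>k=1..K. real (relay_aoi pol k t)) / (real T * real K)"

end

theory Submission
  imports Defs
begin

lemma ind_sum: "(\<Sum>m<N. (if m < (x::nat) then 1 else 0::nat)) = min N x"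
  by (induction N) auto

lemma card_split:
  "card {k\<in>{1..K}. m < (g k::nat)} = K - card {k\<in>{1..K}. g k \<le> m}"
proof -
  have "{k\<in>{1..K}. m < g k} \<union> {k\<in>{1..K}. g k \<le> m} = {1..K}" by auto
  moreover have "{k\<in>{1..K}. m < g k} \<inter> {k\<in>{1..K}. g k \<le> m} = {}" by auto
  ultimately have "card {k\<in>{1..K}. m < g k} + card {k\<in>{1..K}. g k \<le> m} = K"
    by (metis (no_types, lifting) card_Un_disjoint card_atLeastAtMost diff_Suc_1 finite_Un finite_atLeastAtMost)
  then show ?thesis by linarith
qed

lemma layer:
  "(\<Sum>k\<in>{1..K}. min (Suc n) (g k::nat)) = (\<Sum>m<Suc n. K - card {k\<in>{1..K}. g k \<le> m})"
proof -
  have "(\<Sum>k\<in>{1..K}. min (Suc n) (g k)) = (\<Sum>k\<in>{1..K}. \<Sum>m<Suc n. (if m < g k then 1 else 0::nat))"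
    by (simp add: ind_sum)
  also have "\<dots> = (\<Sum>m<Suc n. \<Sum>k\<in>{1..K}. (if m < g k then 1 else 0::nat))"
    by (rule sum.swap)
  also have "\<dots> = (\<Sum>m<Suc n. card {k\<in>{1..K}. m < g k})"
    by (simp add: sum.If_cases Int_def)
  also have "\<dots> = (\<Sum>m<Suc n. K - card {k\<in>{1..K}. g k \<le> m})"
    by (intro sum.cong refl) (rule card_split)
  finally show ?thesis .
qed

lemma traj_fst: "fst (traj pol (Suc n)) k =
   (if k \<in> fst (pol (traj pol n)) then 1 else fst (traj pol n) k + 1)"
  by (simp add: step_def Let_def)

lemma bounds: "1 \<le> fst (traj pol n) k \<and> fst (traj pol n) k \<le> Suc n"
  by (induction n arbitrary: k) (simp, auto simp: traj_fst simp del: traj.simps)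

lemma vp_fst: "valid_policy K S U pol \<Longrightarrow> fst (pol st) \<subseteq> {1..K} \<and> card (fst (pol st)) = S"
  unfolding valid_policy_def by blast

lemma gen_count:
  assumes vp: "valid_policy K S U pol"
  shows "\<forall>m. m \<le> n \<longrightarrow> card {k\<in>{1..K}. fst (traj pol n) k \<le> m} \<le> S*m"
proof (induction n)
  case 0
  show ?case
  proof (intro allI impI)
    fix m :: nat assume "m \<le> 0"
    then have "m = 0" by simp
    then have "{k\<in>{1..K}. fst (traj pol 0) k \<le> m} = {}" by simp
    then show "card {k\<in>{1..K}. fst (traj pol 0) k \<le> m} \<le> S*m" by (simp only: card.empty le0)
  qed
next
  case (Suc n)
  show ?case
  proof (intro allI impI)
    fix m :: nat assume m: "m \<le> Suc n"
    show "card {k\<in>{1..K}. fst (traj pol (Suc n)) k \<le> m} \<le> S*m"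
    proof (cases m)
      case 0
      have nz: "\<And>k. fst (traj pol (Suc n)) k \<noteq> 0" by (metis bounds not_one_le_zero)
      have E: "{k\<in>{1..K}. fst (traj pol (Suc n)) k \<le> m} = {}" using 0 nz by auto
      show ?thesis by (simp only: E card.empty le0)
    next
      case (Suc m')
      let ?A = "fst (pol (traj pol n))"
      have v: "?A \<subseteq> {1..K}" "card ?A = S" using vp_fst[OF vp, of "traj pol n"] by simp_all
      have fA: "finite ?A" using v(1) finite_subset by blast
      have sub: "{k\<in>{1..K}. fst (traj pol (Suc n)) k \<le> m} \<subseteq> ?A \<union> {k\<in>{1..K}. fst (traj pol n) k \<le> m'}"
        using Suc by (auto simp: traj_fst simp del: traj.simps split: if_splits)
      have "card {k\<in>{1..K}. fst (traj pol (Suc n)) k \<le> m} \<le> card (?A \<union> {k\<in>{1..K}. fst (traj pol n) k \<le> m'})"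
        by (rule card_mono[OF _ sub]) (simp add: fA)
      also have "\<dots> \<le> card ?A + card {k\<in>{1..K}. fst (traj pol n) k \<le> m'}"
        by (rule card_Un_le)
      also have "\<dots> \<le> S + S*m'" using Suc.IH m \<open>m = Suc m'\<close> v(2) by simp
      finally show ?thesis using \<open>m = Suc m'\<close> by simp
    qed
  qed
qed

lemma greedy_exch:
  assumes gr: "is_greedy K S U G" and x: "x \<in> fst (G (g, h))" and y: "y \<in> {1..K}" "y \<notin> fst (G (g, h))"
  shows "g y \<le> g x"
proof -
  let ?B = "fst (G (g, h))"
  have v: "?B \<subseteq> {1..K}" "card ?B = S" using gr by (auto simp: is_greedy_def valid_policy_def)
  have fin: "finite ?B" using v finite_subset by blast
  let ?A = "insert y (?B - {x})"
  have S0: "S > 0" using fin x v by (auto simp: card_gt_0_iff)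
  have "?A \<subseteq> {1..K}" using v y by auto
  moreover have "card ?A = S" using v fin x y S0 by (simp add: card_Diff_singleton)
  ultimately have "sum g ?A \<le> sum g ?B" using gr by (auto simp: is_greedy_def)
  moreover have "sum g ?A = g y + sum g (?B - {x})" using fin y by simp
  moreover have "sum g ?B = g x + sum g (?B - {x})" using fin x by (simp add: sum.remove)
  ultimately show ?thesis by simp
qed

lemma greedy_count:
  assumes gr: "is_greedy K S U G" and SK: "S < K"
  shows "m \<le> n \<Longrightarrow> card {k\<in>{1..K}. fst (traj G n) k \<le> m} = min K (S*m)"
proof (induction n arbitrary: m)
  case 0
  then have "{k\<in>{1..K}. fst (traj G 0) k \<le> m} = {}" using 0 by auto
  then show ?case using 0 by simp
next
  case (Suc n)
  show ?case
  proof (cases m)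
    case 0
    then have "{k\<in>{1..K}. fst (traj G (Suc n)) k \<le> m} = {}" using bounds[of G "Suc n"]
      by (metis (no_types, lifting) Collect_empty_eq le_zero_eq not_one_le_zero)
    then show ?thesis using 0 by simp
  next
    case (Suc m')
    obtain g h where st: "traj G n = (g, h)" by fastforce
    let ?A = "fst (G (g, h))"
    have v: "?A \<subseteq> {1..K}" "card ?A = S" using gr by (auto simp: is_greedy_def valid_policy_def)
    have fin: "finite ?A" using v finite_subset by blast
    let ?U = "{1..K} - ?A"
    have cU: "card ?U = K - S" using v fin by (simp add: card_Diff_subset)
    have IH: "card {k\<in>{1..K}. g k \<le> m'} = min K (S*m')" using Suc.IH[of m'] Suc.prems \<open>m = Suc m'\<close> st by simp
    have eq: "{k\<in>{1..K}. fst (traj G (Suc n)) k \<le> m} = ?A \<union> (?U \<inter> {k\<in>{1..K}. g k \<le> m'})"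
      using Suc v st by (auto simp: traj_fst simp del: traj.simps split: if_splits)
    have "card {k\<in>{1..K}. fst (traj G (Suc n)) k \<le> m} = S + card (?U \<inter> {k\<in>{1..K}. g k \<le> m'})"
      unfolding eq using v fin by (subst card_Un_disjoint) auto
    also have "card (?U \<inter> {k\<in>{1..K}. g k \<le> m'}) = min (K - S) (min K (S*m'))"
    proof (cases "\<exists>x\<in>?A. g x \<le> m'")
      case True
      then obtain x where x: "x \<in> ?A" "g x \<le> m'" by blast
      have "?U \<subseteq> {k\<in>{1..K}. g k \<le> m'}"
      proof
        fix k assume k: "k \<in> ?U"
        then have "g k \<le> g x" using greedy_exch[OF gr x(1)] by blast
        then show "k \<in> {k\<in>{1..K}. g k \<le> m'}" using k x(2) by auto
      qed
      then have e: "?U \<inter> {k\<in>{1..K}. g k \<le> m'} = ?U" by blast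
      have "card ?U \<le> card {k\<in>{1..K}. g k \<le> m'}"
        by (rule card_mono[OF _ \<open>?U \<subseteq> _\<close>]) simp
      then show ?thesis using e cU IH by simp
    next
      case False
      then have e: "?U \<inter> {k\<in>{1..K}. g k \<le> m'} = {k\<in>{1..K}. g k \<le> m'}" by auto
      have "card {k\<in>{1..K}. g k \<le> m'} \<le> card ?U"
        by (rule card_mono) (use e in auto)
      then show ?thesis using e cU IH by simp
    qed
    also have "S + min (K - S) (min K (S*m')) = min K (S*m)"
    proof -
      have gen: "\<And>x::nat. S + min (K - S) (min K x) = min K (S + x)" using SK unfolding min_def by arith
      have "S*m = S + S*m'" using \<open>m = Suc m'\<close> by simp
      then show ?thesis using gen[of "S*m'"] by simp
    qed
    finally show ?thesis .
  qed
qed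

lemma pointwise:
  assumes gr: "is_greedy K S U G" and SK: "S < K" and vp: "valid_policy K S U pol"
  shows "(\<Sum>k\<in>{1..K}. fst (traj G n) k) \<le> (\<Sum>k\<in>{1..K}. fst (traj pol n) k)"
proof -
  have "(\<Sum>k\<in>{1..K}. fst (traj G n) k) = (\<Sum>k\<in>{1..K}. min (Suc n) (fst (traj G n) k))"
    using bounds[of G n] by (simp add: min.absorb2)
  also have "\<dots> = (\<Sum>m<Suc n. K - card {k\<in>{1..K}. fst (traj G n) k \<le> m})" by (rule layer)
  also have "\<dots> = (\<Sum>m<Suc n. K - S*m)"
    using greedy_count[OF gr SK] by (intro sum.cong) (auto simp: min_def)
  also have "\<dots> \<le> (\<Sum>m<Suc n. K - card {k\<in>{1..K}. fst (traj pol n) k \<le> m})"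
    using gen_count[OF vp, of n] by (intro sum_mono) (simp add: diff_le_mono2)
  also have "\<dots> = (\<Sum>k\<in>{1..K}. min (Suc n) (fst (traj pol n) k))" by (rule layer[symmetric])
  also have "\<dots> \<le> (\<Sum>k\<in>{1..K}. fst (traj pol n) k)" by (intro sum_mono) simp
  finally show ?thesis .
qed

theorem proposition2:
  fixes K S U T :: nat and G :: policy
  assumes "K \<ge> 2" and "1 \<le> S" and "S < K" and "1 \<le> U" and "U < K" and "S = U"
    and "is_greedy K S U G" and "T \<ge> 1"
  shows "\<forall>pol. valid_policy K S U pol \<longrightarrow> avg_relay_aoi K T G \<le> avg_relay_aoi K T pol"
proof (intro allI impI)
  fix pol assume vp: "valid_policy K S U pol"
  have "(\<Sum>t=1..T. \<Sum>k=1..K. real (relay_aoi G k t)) \<le> (\<Sum>t=1..T. \<Sum>k=1..K. real (relay_aoi pol k t))"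
  proof (rule sum_mono)
    fix t
    have h: "(\<Sum>k=1..K. relay_aoi G k t) \<le> (\<Sum>k=1..K. relay_aoi pol k t)"
      unfolding relay_aoi_def by (rule pointwise[OF assms(7) assms(3) vp])
    then show "(\<Sum>k=1..K. real (relay_aoi G k t)) \<le> (\<Sum>k=1..K. real (relay_aoi pol k t))"
      by (metis of_nat_le_iff of_nat_sum)
  qed
  moreover have "real T * real K > 0" using assms by simp
  ultimately show "avg_relay_aoi K T G \<le> avg_relay_aoi K T pol"
    unfolding avg_relay_aoi_def by (simp add: divide_right_mono)
qed

end
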